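(* Let $n\ge1$ and let $\mathcal C$ be an EACP over $\mathbb R$ with natural basis $\{h_1,\dots,h_n,r\}$ and structural constants $a_{ij},b_i\in\mathbb R$; identify $\sum_i x_ih_i+ur$ with $(x_1,\dots,x_n,u)$. For $u\in\mathbb R$ let $T_u=(t_{ij})_{i,j=1}^n$ with $t_{ij}=ua_{ji}$ for $i\neq j$ and $t_{ii}=ua_{ii}-1$, and let ${\bf b}(x)=\sum_{i=1}^n b_ix_i$ for $x=(x_1,\dots,x_n)$. Then the set of idempotent elements $\{y\in\mathcal C: y^2=y\}$ equals $$\{0\}\cup\{(x_1^*,\dots,x_n^*,u_* ): u_*\neq0,\ \det(T_{u_*})=0,\ T_{u_*}x^*=0,\ {\bf b}(x^* )=1\},$$ where $x^*=(x_1^*,\dots,x_n^* )$ is viewed as a column vector.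
   Context: An EACP over a field $K$ (characteristic $\neq 2$) is a $K$-algebra $\mathcal C$ with a basis $\{h_1,\dots,h_n,r\}$ (called a natural basis) whose multiplication is determined by bilinearity from $$h_ir=rh_i=\tfrac12\Big(\sum_{j=1}^n a_{ij}h_j+b_ir\Big),\qquad h_ih_j=0\ (i,j=1,\dots,n),\qquad rr=0,$$ for some constants $a_{ij},b_i\in K$. *)

theory Defs
  imports "HOL-Analysis.Analysis"
begin

text \<open>Elements of an EACP over the reals with natural basis h_1..h_n, r are identified
with coordinate pairs (x, u) in (real^'n) \<times> real, i.e. sum_i x_i h_i + u r.
Structural constants: A $ i $ j = a_ij, b $ i = b_i.\<close>

definition hb :: "'n::finite \<Rightarrow> (real^'n) \<times> real" where
  "hb i = (axis i 1, 0)"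

definition rb :: "(real^'n::finite) \<times> real" where
  "rb = (0, 1)"

definition hr :: "real^'n^'n \<Rightarrow> real^'n \<Rightarrow> 'n::finite \<Rightarrow> (real^'n) \<times> real" where
  "hr A b i = (1/2) *\<^sub>R ((\<Sum>j\<in>UNIV. (A $ i $ j) *\<^sub>R hb j) + (b $ i) *\<^sub>R rb)"

text \<open>Bilinear extension of the table h_i h_j = 0, h_i r = r h_i = hr, r r = 0.\<close>
definition eacp_mult :: "real^'n^'n \<Rightarrow> real^'n \<Rightarrow> (real^'n) \<times> real \<Rightarrow> (real^'n) \<times> real
    \<Rightarrow> (real^'n::finite) \<times> real" where
  "eacp_mult A b y z =
     (\<Sum>i\<in>UNIV. \<Sum>j\<in>UNIV. (fst y $ i * fst z $ j) *\<^sub>R (0 :: (real^'n) \<times> real))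
   + (\<Sum>i\<in>UNIV. (fst y $ i * snd z) *\<^sub>R hr A b i)
   + (\<Sum>i\<in>UNIV. (snd y * fst z $ i) *\<^sub>R hr A b i)
   + (snd y * snd z) *\<^sub>R (0 :: (real^'n) \<times> real)"

definition Tmat :: "real^'n^'n \<Rightarrow> real \<Rightarrow> real^'n^'n::finite" where
  "Tmat A u = (\<chi> i j. if i = j then u * A $ i $ i - 1 else u * A $ j $ i)"

definition bfun :: "real^'n \<Rightarrow> real^'n::finite \<Rightarrow> real" where
  "bfun b x = (\<Sum>i\<in>UNIV. b $ i * x $ i)"

end

theory Submission
  imports Defs
begin

lemma mult_fst: "fst (eacp_mult A b (x,u) (x,u)) $ k = u * (\<Sum>i\<in>UNIV. x$i * A$i$k)"
  unfolding eacp_mult_def hr_def hb_def rb_def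
  by (simp add: fst_sum sum_component axis_def sum.distrib[symmetric] sum_distrib_left if_distrib
       cong: if_cong)

lemma mult_snd: "snd (eacp_mult A b (x,u) (x,u)) = u * bfun b x"
  unfolding eacp_mult_def hr_def hb_def rb_def bfun_def
  by (simp add: snd_sum sum.distrib[symmetric] sum_distrib_left algebra_simps)

lemma Tx: "(Tmat A u *v x) $ k = u * (\<Sum>i\<in>UNIV. x$i * A$i$k) - x $ k"
proof -
  have "(Tmat A u *v x) $ k = (\<Sum>j\<in>UNIV. u * (x$j * A$j$k) - (if k = j then x$j else 0))"
    unfolding Tmat_def matrix_vector_mult_def by (auto intro!: sum.cong simp: algebra_simps)
  also have "\<dots> = u * (\<Sum>i\<in>UNIV. x$i * A$i$k) - x $ k"
    by (simp add: sum_subtractf sum_distrib_left)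
  finally show ?thesis .
qed

lemma ker: "det (T::real^'n^'n) \<noteq> 0 \<Longrightarrow> T *v x = 0 \<Longrightarrow> x = 0"
  by (metis invertible_det_nz matrix_left_invertible_ker invertible_def)

lemma idem_iff: "eacp_mult A b (x,u) (x,u) = (x,u) \<longleftrightarrow>
   (Tmat A u *v x = 0 \<and> u * bfun b x = u)"
proof -
  have "eacp_mult A b (x,u) (x,u) = (x,u) \<longleftrightarrow>
     (fst (eacp_mult A b (x,u) (x,u)) = x \<and> snd (eacp_mult A b (x,u) (x,u)) = u)"
    by (metis prod.collapse prod.inject)
  also have "fst (eacp_mult A b (x,u) (x,u)) = x \<longleftrightarrow> Tmat A u *v x = 0"
    by (simp add: vec_eq_iff mult_fst Tx)
  finally show ?thesis by (simp add: mult_snd)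
qed

lemma bfun0: "bfun b 0 = 0" by (simp add: bfun_def)

theorem mainTheorem9:
  fixes A :: "real^'n^'n" and b :: "real^'n"
  shows "{y. eacp_mult A b y y = y} =
         {0} \<union> {(x, u). u \<noteq> 0 \<and> det (Tmat A u) = 0 \<and> Tmat A u *v x = 0 \<and> bfun b x = 1}"
proof (intro set_eqI iffI)
  fix y assume "y \<in> {y. eacp_mult A b y y = y}"
  moreover obtain x u where y: "y = (x,u)" by fastforce
  ultimately have T: "Tmat A u *v x = 0" and B: "u * bfun b x = u" by (auto simp: idem_iff)
  show "y \<in> {0} \<union> {(x, u). u \<noteq> 0 \<and> det (Tmat A u) = 0 \<and> Tmat A u *v x = 0 \<and> bfun b x = 1}"
  proof (cases "u = 0")
    case True
    have "x = 0"
    proof (rule vec_eq_iff[THEN iffD2], rule allI)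
      fix k have "(Tmat A u *v x) $ k = 0" using T by simp
      thus "x $ k = 0 $ k" using True by (simp add: Tx)
    qed
    with True y show ?thesis by (simp add: zero_prod_def)
  next
    case False
    with B have b1: "bfun b x = 1" by simp
    hence "x \<noteq> 0" using bfun0[of b] by auto
    hence "det (Tmat A u) = 0" using ker T by blast
    with False b1 T y show ?thesis by simp
  qed
next
  fix y assume "y \<in> {0} \<union> {(x, u). u \<noteq> 0 \<and> det (Tmat A u) = 0 \<and> Tmat A u *v x = 0 \<and> bfun b x = 1}"
  moreover obtain x u where y: "y = (x,u)" by fastforce
  ultimately have "(x = 0 \<and> u = 0) \<or> (Tmat A u *v x = 0 \<and> bfun b x = 1)"
    by (auto simp: zero_prod_def)
  thus "y \<in> {y. eacp_mult A b y y = y}"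
    by (auto simp: y idem_iff bfun0)
qed

end
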